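(* Let $q$ be a prime power, $n\ge 2$, $c\in\mathbb{F}_q^*$ and $M=c\,\mathbb{I}_{n\times n}$. Let $\mathcal{B}_n=\{u\in\mathbb{F}_q^n : \langle u,u\rangle=0\}$ and $\nu'_M:\mathcal{B}_n\to\mathbb{F}_q$, $\nu'_M(u)=\langle u,Mu\rangle$. (i) If $q$ is even, then $\mathrm{Num}'_0(c\,\mathbb{I}_{n\times n})_q=\{0\}$ and $\sharp(\nu_M'^{-1}(0))=q^{n-1}$. (ii) Assume $q$ is odd. Then $\mathrm{Num}'_0(c\,\mathbb{I}_{n\times n})_q=\{0\}$ if either $n\ge 3$, or $n=2$ and $q\equiv 1\pmod 4$, while $\mathrm{Num}'_0(c\,\mathbb{I}_{n\times n})_q=\emptyset$ if $n=2$ and $q\equiv -1\pmod 4$. If $n=2s+1$ is odd, then $\sharp(\nu_M'^{-1}(0))=q^{2s}$. If $n=2s$ with either $s$ even or $q\equiv 1\pmod 4$, then $\sharp(\nu_M'^{-1}(0))=q^{2s-1}+q^s-q^{s-1}$. If $n=2s$ with $s$ odd and $q\equiv -1\pmod 4$, then $\sharp(\nu_M'^{-1}(0))=q^{2s-1}-q^s+q^{s-1}$.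
   Context: The Hermitian form is $\langle u,v\rangle=\sum_i u_i^qv_i$; for $u=(x_1,\dots,x_n)\in\mathbb{F}_q^n$ and $M=(m_{ij})$ over $\mathbb{F}_q$, $\langle u,u\rangle=\sum x_i^2$ and $\langle u,Mu\rangle=\sum_{i,j}m_{ij}x_ix_j$. $\mathrm{Num}'_0(M)_q=\{\langle u,Mu\rangle: u\in\mathbb{F}_q^n\setminus\{0\},\ \langle u,u\rangle=0\}$. *)

theory Defs
  imports "HOL-Analysis.Analysis"
begin

text \<open>Vectors in F_q^n are 'a^'n with 'a a finite field (q = CARD('a)), n = CARD('n).
  Hermitian form <u,v> = sum_i u_i^q v_i.\<close>

definition herm :: "'a::{field,finite}^'n \<Rightarrow> 'a^'n \<Rightarrow> 'a" where
  "herm u v = (\<Sum>i\<in>UNIV. (u $ i) ^ CARD('a) * v $ i)"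

definition Num0' :: "'a::{field,finite}^'n^'n \<Rightarrow> 'a set" where
  "Num0' M = {herm u (M *v u) | u. u \<noteq> 0 \<and> herm u u = 0}"

definition Bset :: "('a::{field,finite}^'n) set" where
  "Bset = {u. herm u u = 0}"

definition nu' :: "'a::{field,finite}^'n^'n \<Rightarrow> 'a^'n \<Rightarrow> 'a" where
  "nu' M u = herm u (M *v u)"

definition nu'_preimage :: "'a::{field,finite}^'n^'n \<Rightarrow> 'a \<Rightarrow> ('a^'n) set" where
  "nu'_preimage M a = {u \<in> Bset. nu' M u = a}"

end

theory Submission
  imports Defs
begin


lemma card_ge2: "CARD('a::{field,finite}) \<ge> 2"
proof -
  have "card {0::'a,1} = 2" by simp
  moreover have "card {0::'a,1} \<le> CARD('a)" by (rule card_mono) auto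
  ultimately show ?thesis by simp
qed

lemma pow_card: "(x::'a::{field,finite}) ^ CARD('a) = x"
proof (cases "x = 0")
  case True then show ?thesis using card_ge2[where 'a='a] by (simp add: power_0_left)
next
  case False
  define U where "U = (UNIV::'a set) - {0}"
  have fin: "finite U" by (simp add: U_def)
  have inj: "inj_on (\<lambda>y. x*y) U" using False by (auto simp: inj_on_def)
  have img: "(\<lambda>y. x*y) ` U = U"
  proof
    show "(\<lambda>y. x*y) ` U \<subseteq> U" using False by (auto simp: U_def)
    show "U \<subseteq> (\<lambda>y. x*y) ` U"
    proof
      fix z assume "z \<in> U"
      then have "z = x * (z/x)" "z/x \<in> U" using False by (auto simp: U_def)
      then show "z \<in> (\<lambda>y. x*y) ` U" by blast
    qed
  qed
  have "(\<Prod>y\<in>U. x*y) = (\<Prod>y\<in>(\<lambda>y. x*y) ` U. y)"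
    by (simp add: prod.reindex[OF inj])
  also have "\<dots> = (\<Prod>y\<in>U. y)" by (simp add: img)
  finally have e: "x ^ card U * (\<Prod>y\<in>U. y) = (\<Prod>y\<in>U. y)"
    by (simp add: prod.distrib)
  have "(\<Prod>y\<in>U. y) \<noteq> 0" using fin by (simp add: U_def)
  then have "x ^ card U = 1" using e by simp
  moreover have "card U = CARD('a) - 1" by (simp add: U_def card_Diff_singleton)
  moreover have "CARD('a) = Suc (CARD('a) - 1)" using card_ge2[where 'a='a] by simp
  ultimately show ?thesis by (metis power_Suc mult_1_right mult.commute)
qed

lemma invol_even:
  assumes "finite X" "\<And>x. x \<in> X \<Longrightarrow> h x \<in> X" "\<And>x. x \<in> X \<Longrightarrow> h (h x) = x"
    "\<And>x. x \<in> X \<Longrightarrow> h x \<noteq> x"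
  shows "even (card X)"
  using assms
proof (induction "card X" arbitrary: X rule: less_induct)
  case less
  show ?case
  proof (cases "X = {}")
    case True then show ?thesis by simp
  next
    case False
    then obtain x where x: "x \<in> X" by blast
    define Y where "Y = X - {x, h x}"
    have hx: "h x \<in> X" "h x \<noteq> x" using less x by auto
    have sub: "{x, h x} \<subseteq> X" using x hx by auto
    have c2: "card {x, h x} = 2" using hx by simp
    have "card {x, h x} \<le> card X" using sub less(2) by (rule card_mono[rotated])
    moreover have "card Y = card X - card {x, h x}"
      unfolding Y_def by (rule card_Diff_subset) (use sub less(2) in auto)
    ultimately have cY: "card X = card Y + 2" using c2 by simp
    have "even (card Y)"
    proof (rule less(1))
      show "card Y < card X" using cY by simp
      show "finite Y" using less(2) by (simp add: Y_def)
      fix y assume y: "y \<in> Y"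
      have yX: "y \<in> X" "y \<noteq> x" "y \<noteq> h x" using y by (auto simp: Y_def)
      have "h y \<noteq> x" using yX less(4)[of y] by metis
      moreover have "h y \<noteq> h x" using yX less(4)[of y] less(4)[OF x] by metis
      ultimately show "h y \<in> Y" using less(3)[OF yX(1)] by (simp add: Y_def)
      show "h (h y) = y" using y less(4) by (auto simp: Y_def)
      show "h y \<noteq> y" using y less(5) by (auto simp: Y_def)
    qed
    then show ?thesis using cY by simp
  qed
qed

lemma two_zero_iff: "((2::'a::{field,finite}) = 0) \<longleftrightarrow> even CARD('a)"
proof
  assume 2: "(2::'a) = 0"
  show "even CARD('a)"
  proof (rule invol_even[where h="\<lambda>x. x + 1"])
    fix x :: 'a
    have "x + 1 + 1 = x + 2" by (simp add: add.assoc)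
    then show "x + 1 + 1 = x" using 2 by simp
  qed simp_all
next
  assume ev: "even CARD('a)"
  show "(2::'a) = 0"
  proof (rule ccontr)
    assume 2: "(2::'a) \<noteq> 0"
    define U where "U = (UNIV::'a set) - {0}"
    have "even (card U)"
    proof (rule invol_even[where h="uminus"])
      show "finite U" by simp
      fix x assume "x \<in> U"
      then have x0: "x \<noteq> 0" by (simp add: U_def)
      show "-x \<in> U" "- (- x) = x" using x0 by (auto simp: U_def)
      show "- x \<noteq> x"
      proof
        assume "-x = x"
        then have "x + x = 0" by (metis add.left_inverse)
        then have "2 * x = 0" by (metis mult_2)
        then show False using 2 x0 by simp
      qed
    qed
    moreover have "card U = CARD('a) - 1" by (simp add: U_def card_Diff_singleton)
    ultimately have "even (CARD('a) - 1)" by simp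
    then show False using ev card_ge2[where 'a='a] by presburger
  qed
qed

lemma card_sq_fiber:
  assumes "(2::'a::{field,finite}) \<noteq> 0"
  shows "card {x::'a. x^2 = d^2} = (if d = 0 then 1 else 2)"
proof -
  have "{x::'a. x^2 = d^2} = {d, -d}" by (auto simp: power2_eq_iff)
  moreover have "d \<noteq> 0 \<Longrightarrow> d \<noteq> -d"
  proof
    assume "d \<noteq> 0" "d = -d"
    then have "d + d = 0" by (metis add.right_inverse)
    then have "2 * d = 0" by (metis mult_2)
    with assms \<open>d \<noteq> 0\<close> show False by simp
  qed
  ultimately show ?thesis by auto
qed

definition nzsq :: "'a::{field,finite} set" where
  "nzsq = {y. y \<noteq> 0 \<and> (\<exists>x. y = x^2)}"

lemma card_nzsq:
  assumes "(2::'a::{field,finite}) \<noteq> 0"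
  shows "CARD('a) - 1 = 2 * card (nzsq::'a set)"
proof -
  have U: "(UNIV::'a set) - {0} = (\<Union>y\<in>nzsq. {x. x^2 = y})"
    by (auto simp: nzsq_def)
  have "card ((UNIV::'a set) - {0}) = (\<Sum>y\<in>nzsq. card {x::'a. x^2 = y})"
    unfolding U by (rule card_UN_disjoint) auto
  also have "\<dots> = (\<Sum>y\<in>(nzsq::'a set). 2)"
  proof (rule sum.cong)
    fix y :: 'a assume "y \<in> nzsq"
    then obtain d where d: "y = d^2" "d \<noteq> 0" by (auto simp: nzsq_def)
    show "card {x. x^2 = y} = 2" using card_sq_fiber[OF assms, of d] d by simp
  qed simp
  finally show ?thesis by (simp add: card_Diff_singleton)
qed

lemma odd_two_ne: "odd CARD('a::{field,finite}) \<Longrightarrow> (2::'a) \<noteq> 0"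
  using two_zero_iff by blast

lemma minus_one_sq_imp:
  assumes odd: "odd CARD('a::{field,finite})" and i: "(i::'a)^2 = -1"
  shows "CARD('a) mod 4 = 1"
proof -
  have 2: "(2::'a) \<noteq> 0" using odd_two_ne[OF odd] .
  have i0: "i \<noteq> 0" using i by auto
  obtain m where m: "CARD('a) = Suc (2 * m)" using odd by (metis oddE Suc_eq_plus1)
  have "i * i ^ (2*m) = i * 1" using pow_card[of i] m by simp
  then have "i ^ (2*m) = 1" using i0 by (metis mult_cancel_left)
  then have "(-1::'a) ^ m = 1" using i by (simp add: power_mult)
  moreover have "(-1::'a) \<noteq> 1"
  proof
    assume "(-1::'a) = 1"
    then have "(1::'a) + 1 = 0" by (metis add.left_inverse)
    with 2 show False by simp
  qed
  ultimately have "even m" by (metis power_minus_odd power_one)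
  then show ?thesis using m by (auto elim!: evenE)
qed

lemma minus_one_sq_if:
  assumes odd: "odd CARD('a::{field,finite})" and q: "CARD('a) mod 4 = 1"
  shows "\<exists>i::'a. i^2 = -1"
proof (rule ccontr)
  assume no: "\<not> (\<exists>i::'a. i^2 = -1)"
  have 2: "(2::'a) \<noteq> 0" using odd_two_ne[OF odd] .
  have cS: "CARD('a) - 1 = 2 * card (nzsq::'a set)" using card_nzsq[OF 2] .
  have "even (card (nzsq::'a set))"
    using cS q by presburger
  have one: "(1::'a) \<in> nzsq" by (auto simp: nzsq_def intro!: exI[of _ 1])
  define S' where "S' = (nzsq::'a set) - {1}"
  have "even (card S')"
  proof (rule invol_even[where h=inverse])
    show "finite S'" by simp
    fix y assume y: "y \<in> S'"
    then obtain x where x: "y = x^2" "y \<noteq> 0" "y \<noteq> 1" by (auto simp: S'_def nzsq_def)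
    show "inverse y \<in> S'" using x by (auto simp: S'_def nzsq_def power_inverse intro!: exI[of _ "inverse x"])
    show "inverse (inverse y) = y" by simp
    show "inverse y \<noteq> y"
    proof
      assume "inverse y = y"
      then have "y * y = 1" using right_inverse[OF x(2)] by simp
      then have "y^2 = 1^2" by (simp add: power2_eq_square)
      then have "y = 1 \<or> y = -1" by (rule power2_eq_iff[THEN iffD1])
      moreover have "y \<noteq> -1"
      proof
        assume "y = -1"
        then have "x^2 = -1" using x(1) by simp
        then show False using no by blast
      qed
      ultimately show False using x(3) by simp
    qed
  qed
  moreover have "card S' = card (nzsq::'a set) - 1" using one by (simp add: S'_def)
  moreover have "card (nzsq::'a set) > 0" using one by (auto simp: card_gt_0_iff)
  ultimately show False using \<open>even (card nzsq)\<close> by presburger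
qed

lemma sum_two_sq:
  assumes odd: "odd CARD('a::{field,finite})"
  shows "\<exists>\<alpha> \<beta>::'a. \<alpha>^2 + \<beta>^2 = l"
proof (rule ccontr)
  assume no: "\<not> ?thesis"
  have 2: "(2::'a) \<noteq> 0" using odd_two_ne[OF odd] .
  define A where "A = insert 0 (nzsq::'a set)"
  define B where "B = (\<lambda>x. l - x) ` A"
  have cA: "card A = card (nzsq::'a set) + 1" by (simp add: A_def nzsq_def)
  have cB: "card B = card A" unfolding B_def by (rule card_image) (auto simp: inj_on_def)
  have disj: "A \<inter> B = {}"
  proof (rule ccontr)
    assume "A \<inter> B \<noteq> {}"
    then obtain y where "y \<in> A" "y \<in> B" by blast
    then obtain a b where ab: "y = a^2" "y = l - b^2"
      by (auto simp: A_def B_def nzsq_def) (metis zero_power2)+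
    then have "l - b^2 = a^2" by simp
    then have "l = a^2 + b^2" by (simp add: diff_eq_eq)
    then have "a^2 + b^2 = l" by simp
    with no show False by blast
  qed
  have "card (A \<union> B) = card A + card B" using disj by (simp add: card_Un_disjoint)
  moreover have "card (A \<union> B) \<le> CARD('a)" by (rule card_mono) auto
  moreover have "CARD('a) - 1 = 2 * card (nzsq::'a set)" using card_nzsq[OF 2] .
  ultimately show False using cA cB by linarith
qed



definition ssq :: "'a::{field,finite} list \<Rightarrow> 'a" where
  "ssq xs = sum_list (map (\<lambda>x. x^2) xs)"

definition NC :: "nat \<Rightarrow> 'a::{field,finite} \<Rightarrow> nat" where
  "NC k a = card {xs::'a list. length xs = k \<and> ssq xs = a}"

lemma fin_len: "finite {xs::'a::finite list. length xs = k}"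
  using finite_lists_length_eq[of "UNIV::'a set" k] by simp

lemma fin_len': "finite {xs::'a::finite list. length xs = k \<and> P xs}"
  by (rule finite_subset[OF _ fin_len[of k]]) auto

lemma NC_0: "NC 0 a = (if a = 0 then 1 else 0)"
proof -
  have "{xs::'a list. length xs = 0 \<and> ssq xs = a} = (if a = 0 then {[]} else {})"
    by (auto simp: ssq_def)
  then show ?thesis by (simp add: NC_def)
qed

lemma NC_Suc: "NC (Suc k) (a::'a::{field,finite}) = (\<Sum>t\<in>UNIV. NC k (a - t^2))"
proof -
  let ?S = "SIGMA t:(UNIV::'a set). {xs::'a list. length xs = k \<and> ssq xs = a - t^2}"
  have eq: "{zs::'a list. length zs = Suc k \<and> ssq zs = a} = (\<lambda>(t,xs). t # xs) ` ?S"
  proof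
    show "(\<lambda>(t,xs). t # xs) ` ?S \<subseteq> {zs. length zs = Suc k \<and> ssq zs = a}"
      by (auto simp: ssq_def)
    show "{zs. length zs = Suc k \<and> ssq zs = a} \<subseteq> (\<lambda>(t,xs). t # xs) ` ?S"
    proof
      fix zs :: "'a list" assume z: "zs \<in> {zs. length zs = Suc k \<and> ssq zs = a}"
      then obtain t xs where zs: "zs = t # xs" "length xs = k" by (auto simp: length_Suc_conv)
      have "ssq zs = t^2 + ssq xs" using zs by (simp add: ssq_def)
      then have "ssq xs = a - t^2" using z by (simp add: eq_diff_eq add.commute)
      then have "(t, xs) \<in> ?S" using zs by simp
      then show "zs \<in> (\<lambda>(t,xs). t # xs) ` ?S" using zs by force
    qed
  qed
  have inj: "inj_on (\<lambda>(t,xs). t # xs) ?S" by (auto simp: inj_on_def)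
  have "NC (Suc k) a = card ?S" unfolding NC_def eq by (rule card_image[OF inj])
  also have "\<dots> = (\<Sum>t\<in>UNIV. card {xs::'a list. length xs = k \<and> ssq xs = a - t^2})"
    by (rule card_SigmaI) (auto intro: fin_len')
  finally show ?thesis by (simp add: NC_def)
qed

lemma sum_shift: "(\<Sum>a\<in>UNIV. f (a - c)) = (\<Sum>a\<in>(UNIV::'a::{ab_group_add,finite} set). f a)"
  by (rule sum.reindex_bij_witness[where i="\<lambda>a. a + c" and j="\<lambda>a. a - c"]) auto

lemma sum_neg: "(\<Sum>a\<in>UNIV. f (- a)) = (\<Sum>a\<in>(UNIV::'a::{ab_group_add,finite} set). f a)"
  by (rule sum.reindex_bij_witness[where i="\<lambda>a. - a" and j="\<lambda>a. - a"]) auto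

lemma NC_total: "(\<Sum>a\<in>UNIV. NC k (a::'a::{field,finite})) = CARD('a) ^ k"
proof (induction k)
  case 0
  then show ?case by (simp add: NC_0)
next
  case (Suc k)
  have "(\<Sum>a\<in>UNIV. NC (Suc k) (a::'a)) = (\<Sum>a\<in>UNIV. \<Sum>t\<in>UNIV. NC k (a - (t::'a)^2))"
    by (simp add: NC_Suc)
  also have "\<dots> = (\<Sum>t\<in>UNIV. \<Sum>a\<in>UNIV. NC k ((a::'a) - t^2))" by (rule sum.swap)
  also have "\<dots> = (\<Sum>t\<in>(UNIV::'a set). CARD('a) ^ k)"
    by (simp only: sum_shift[where f="NC k"] Suc)
  finally show ?case by simp
qed

lemma NC_1_0: "NC 1 (0::'a::{field,finite}) = 1"
proof -
  have "NC 1 (0::'a) = (\<Sum>t\<in>UNIV. NC 0 ((0::'a) - t^2))" using NC_Suc[of 0 "0::'a"] by simp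
  also have "\<dots> = (\<Sum>t\<in>(UNIV::'a set). if t = 0 then 1 else 0)"
    by (rule sum.cong) (auto simp: NC_0)
  finally show ?thesis by simp
qed

definition N2 :: "'a::{field,finite} \<Rightarrow> nat" where
  "N2 b = card {p::'a \<times> 'a. fst p ^ 2 + snd p ^ 2 = b}"

lemma N2_sum: "N2 (b::'a::{field,finite}) = (\<Sum>t\<in>UNIV. card {u::'a. t^2 + u^2 = b})"
proof -
  have "{p::'a \<times> 'a. fst p ^ 2 + snd p ^ 2 = b} = (SIGMA t:UNIV. {u. t^2 + u^2 = b})" by auto
  then show ?thesis unfolding N2_def by (simp add: card_SigmaI)
qed

lemma double_sum:
  fixes f :: "'a::{field,finite} \<Rightarrow> int"
  shows "(\<Sum>t\<in>UNIV. \<Sum>u\<in>UNIV. f (t^2 + u^2)) = (\<Sum>b\<in>UNIV. int (N2 b) * f b)"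
proof -
  define g where "g = (\<lambda>p::'a\<times>'a. fst p ^ 2 + snd p ^ 2)"
  have "(\<Sum>t\<in>UNIV. \<Sum>u\<in>UNIV. f (t^2 + u^2)) = (\<Sum>p\<in>UNIV \<times> UNIV. f (g p))"
    by (simp add: sum.cartesian_product g_def case_prod_beta)
  also have "\<dots> = (\<Sum>p\<in>UNIV. f (g p))" by simp
  also have "\<dots> = (\<Sum>b\<in>UNIV. \<Sum>p\<in>{p\<in>UNIV. g p = b}. f (g p))"
    by (rule sum.group[symmetric]) auto
  also have "\<dots> = (\<Sum>b\<in>UNIV. int (N2 b) * f b)"
  proof (rule sum.cong)
    fix b assume "b \<in> (UNIV::'a set)"
    have "(\<Sum>p\<in>{p\<in>UNIV. g p = b}. f (g p)) = (\<Sum>p\<in>{p\<in>UNIV. g p = b}. f b)"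
      by (rule sum.cong) auto
    also have "\<dots> = int (card {p\<in>UNIV. g p = b}) * f b" by simp
    finally show "(\<Sum>p\<in>{p\<in>UNIV. g p = b}. f (g p)) = int (N2 b) * f b"
      by (simp add: N2_def g_def)
  qed simp
  finally show ?thesis .
qed

lemma N2_total: "(\<Sum>b\<in>UNIV. int (N2 (b::'a::{field,finite}))) = int (CARD('a))^2"
  using double_sum[of "\<lambda>_::'a. 1"] by (simp add: power2_eq_square)

lemma NC_rec0:
  "int (NC (Suc (Suc k)) (0::'a::{field,finite})) = (\<Sum>b\<in>UNIV. int (N2 (b::'a)) * int (NC k (- b)))"
proof -
  have "NC (Suc (Suc k)) (0::'a) = (\<Sum>t\<in>UNIV. \<Sum>u\<in>UNIV. NC k (- ((t::'a)^2 + u^2)))"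
    by (simp add: NC_Suc diff_diff_eq)
  then have "int (NC (Suc (Suc k)) (0::'a)) = (\<Sum>t\<in>UNIV. \<Sum>u\<in>UNIV. int (NC k (- ((t::'a)^2 + u^2))))"
    by simp
  also have "\<dots> = (\<Sum>b\<in>UNIV. int (N2 (b::'a)) * int (NC k (- b)))"
    using double_sum[of "\<lambda>b::'a. int (NC k (- b))"] by simp
  finally show ?thesis .
qed



lemma N2_le:
  fixes \<alpha> \<beta> b :: "'a::{field,finite}"
  assumes l: "\<alpha>^2 + \<beta>^2 \<noteq> 0"
  shows "N2 b \<le> N2 ((\<alpha>^2 + \<beta>^2) * b)"
proof -
  define l where "l = \<alpha>^2 + \<beta>^2"
  define T where "T = (\<lambda>p::'a\<times>'a. (\<alpha> * fst p - \<beta> * snd p, \<beta> * fst p + \<alpha> * snd p))"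
  have id1: "\<And>x y. l * x = \<alpha> * (\<alpha> * x - \<beta> * y) + \<beta> * (\<beta> * x + \<alpha> * y)"
    unfolding l_def by (simp add: power2_eq_square algebra_simps)
  have id2: "\<And>x y. l * y = \<alpha> * (\<beta> * x + \<alpha> * y) - \<beta> * (\<alpha> * x - \<beta> * y)"
    unfolding l_def by (simp add: power2_eq_square algebra_simps)
  have id3: "\<And>x y. (\<alpha> * x - \<beta> * y)^2 + (\<beta> * x + \<alpha> * y)^2 = l * (x^2 + y^2)"
    unfolding l_def by (simp add: power2_eq_square algebra_simps)
  have l0: "l \<noteq> 0" using l by (simp add: l_def)
  have inj: "inj_on T {p. fst p ^ 2 + snd p ^ 2 = b}"
  proof (rule inj_onI)
    fix p p' assume "p \<in> {p. fst p ^ 2 + snd p ^ 2 = b}" "p' \<in> {p. fst p ^ 2 + snd p ^ 2 = b}"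
      and e: "T p = T p'"
    obtain x y where p: "p = (x, y)" by (cases p)
    obtain x' y' where p': "p' = (x', y')" by (cases p')
    have e1: "\<alpha> * x - \<beta> * y = \<alpha> * x' - \<beta> * y'" and e2: "\<beta> * x + \<alpha> * y = \<beta> * x' + \<alpha> * y'"
      using e by (simp_all add: T_def p p')
    have "l * x = l * x'" using id1[where x=x and y=y] id1[where x=x' and y=y'] e1 e2 by simp
    then have "x = x'" using l0 by simp
    moreover have "l * y = l * y'" using id2[where x=x and y=y] id2[where x=x' and y=y'] e1 e2 by simp
    then have "y = y'" using l0 by simp
    ultimately show "p = p'" using p p' by simp
  qed
  have img: "T ` {p. fst p ^ 2 + snd p ^ 2 = b} \<subseteq> {p. fst p ^ 2 + snd p ^ 2 = l * b}"
    using id3 by (auto simp: T_def)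
  have "card {p. fst p ^ 2 + snd p ^ 2 = b} \<le> card {p::'a\<times>'a. fst p ^ 2 + snd p ^ 2 = l * b}"
    by (rule card_inj_on_le[OF inj img]) simp
  then show ?thesis by (simp add: N2_def l_def)
qed

lemma N2_scale:
  assumes odd: "odd CARD('a::{field,finite})" and l0: "(l::'a) \<noteq> 0"
  shows "N2 (l * b) = N2 b"
proof -
  obtain \<alpha> \<beta> :: 'a where ab: "\<alpha>^2 + \<beta>^2 = l" using sum_two_sq[OF odd] by blast
  obtain \<gamma> \<delta> :: 'a where cd: "\<gamma>^2 + \<delta>^2 = inverse l" using sum_two_sq[OF odd] by blast
  have "N2 b \<le> N2 (l * b)" using N2_le[of \<alpha> \<beta> b] ab l0 by simp
  moreover have "N2 (l * b) \<le> N2 (inverse l * (l * b))" using N2_le[of \<gamma> \<delta> "l*b"] cd l0 by simp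
  moreover have "inverse l * (l * b) = b" using l0 by (simp add: mult.assoc[symmetric])
  ultimately show ?thesis by simp
qed

lemma N2_const:
  assumes odd: "odd CARD('a::{field,finite})" and b0: "(b::'a) \<noteq> 0"
  shows "N2 b = N2 (1::'a)"
  using N2_scale[OF odd b0, of 1] by simp

definition eps :: "'a::{field,finite} itself \<Rightarrow> int" where
  "eps _ = (if \<exists>i::'a. i^2 = -1 then 1 else -1)"

lemma sum_if0: "(\<Sum>t\<in>(UNIV::'a::finite set). (if t = z then (x::int) else y)) = x + (int CARD('a) - 1) * y"
proof -
  have "(\<Sum>t\<in>(UNIV::'a set). (if t = z then x else y)) = (if z = z then x else y) + (\<Sum>t\<in>UNIV - {z}. (if t = z then x else y))"
    by (rule sum.remove) auto
  also have "(\<Sum>t\<in>UNIV - {z}. (if t = z then x else y)) = (\<Sum>t\<in>(UNIV::'a set) - {z}. y)"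
    by (rule sum.cong) auto
  also have "\<dots> = int (CARD('a) - 1) * y" by (simp add: card_Diff_singleton)
  also have "int (CARD('a) - 1) = int CARD('a) - 1"
    using card_ge_0_finite[of "UNIV::'a set"] by (simp add: of_nat_diff Suc_le_eq)
  finally show ?thesis by simp
qed

lemma N2_0:
  assumes odd: "odd CARD('a::{field,finite})"
  shows "int (N2 (0::'a)) = int CARD('a) + (int CARD('a) - 1) * eps TYPE('a)"
proof (cases "\<exists>i::'a. i^2 = -1")
  case True
  then obtain i :: 'a where i: "i^2 = -1" by blast
  have 2: "(2::'a) \<noteq> 0" using odd_two_ne[OF odd] .
  have i0: "i \<noteq> 0" using i by auto
  have "\<And>t::'a. card {u. t^2 + u^2 = 0} = (if t = 0 then 1 else 2)"
  proof -
    fix t :: 'a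
    have it: "(i*t)^2 = - (t^2)" using i by (simp add: power_mult_distrib)
    have "{u. t^2 + u^2 = 0} = {u. u^2 = (i*t)^2}"
      unfolding it by (simp add: add_eq_0_iff)
    then show "card {u. t^2 + u^2 = 0} = (if t = 0 then 1 else 2)"
      using card_sq_fiber[OF 2, of "i*t"] i0 by simp
  qed
  note C = this
  have "int (N2 (0::'a)) = (\<Sum>t\<in>(UNIV::'a set). int (card {u. t^2 + u^2 = 0}))"
    by (simp add: N2_sum of_nat_sum)
  also have "\<dots> = (\<Sum>t\<in>(UNIV::'a set). (if t = 0 then 1 else 2))"
    by (rule sum.cong) (auto simp: C)
  also have "\<dots> = 1 + (int CARD('a) - 1) * 2" by (rule sum_if0)
  finally show ?thesis using True by (simp add: eps_def algebra_simps)
next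
  case False
  have "\<And>t::'a. card {u. t^2 + u^2 = 0} = (if t = 0 then 1 else 0)"
  proof -
    fix t :: 'a
    show "card {u. t^2 + u^2 = 0} = (if t = 0 then 1 else 0)"
    proof (cases "t = 0")
      case True
      then have "{u::'a. t^2 + u^2 = 0} = {0}" by auto
      then show ?thesis using True by simp
    next
      case t0: False
      have "{u::'a. t^2 + u^2 = 0} = {}"
      proof (rule ccontr)
        assume "{u::'a. t^2 + u^2 = 0} \<noteq> {}"
        then obtain u where u: "t^2 + u^2 = 0" by auto
        have "(u / t)^2 = u^2 / t^2" by (simp add: power_divide)
        also have "u^2 = - (t^2)" using u by (simp add: add_eq_0_iff)
        also have "- (t^2) / t^2 = -1" using t0 by simp
        finally show False using False by blast
      qed
      then show ?thesis using t0 by simp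
    qed
  qed
  note C = this
  have "int (N2 (0::'a)) = (\<Sum>t\<in>(UNIV::'a set). int (card {u. t^2 + u^2 = 0}))"
    by (simp add: N2_sum of_nat_sum)
  also have "\<dots> = (\<Sum>t\<in>(UNIV::'a set). (if t = 0 then 1 else 0))"
    by (rule sum.cong) (auto simp: C)
  also have "\<dots> = 1" by simp
  finally show ?thesis using False by (simp add: eps_def)
qed

lemma N2_1:
  assumes odd: "odd CARD('a::{field,finite})"
  shows "int (N2 (1::'a)) = int CARD('a) - eps TYPE('a)"
proof -
  let ?q = "int CARD('a)"
  have "(\<Sum>b\<in>UNIV. int (N2 (b::'a))) = int (N2 (0::'a)) + (\<Sum>b\<in>UNIV - {0}. int (N2 (b::'a)))"
    by (rule sum.remove) auto
  also have "(\<Sum>b\<in>UNIV - {0}. int (N2 (b::'a))) = (\<Sum>b\<in>(UNIV::'a set) - {0}. int (N2 (1::'a)))"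
  proof (rule sum.cong)
    fix b :: 'a assume "b \<in> UNIV - {0}"
    then show "int (N2 b) = int (N2 (1::'a))" using N2_const[OF odd, of b] by simp
  qed simp
  also have "\<dots> = (?q - 1) * int (N2 (1::'a))"
    using card_ge_0_finite[of "UNIV::'a set"] by (simp add: card_Diff_singleton of_nat_diff Suc_le_eq)
  finally have S: "?q^2 = int (N2 (0::'a)) + (?q - 1) * int (N2 (1::'a))"
    using N2_total[where 'a='a] by simp
  have "(?q - 1) * int (N2 (1::'a)) = ?q^2 - int (N2 (0::'a))" using S by linarith
  also have "\<dots> = (?q - 1) * (?q - eps TYPE('a))"
    unfolding N2_0[OF odd] power2_eq_square by (simp add: algebra_simps)
  finally have "(?q - 1) * int (N2 (1::'a)) = (?q - 1) * (?q - eps TYPE('a))" .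
  moreover have "?q - 1 \<noteq> 0" using card_ge2[where 'a='a] by simp
  ultimately show ?thesis by simp
qed



lemma sum_refl: "(\<Sum>s\<in>UNIV. f (a - s)) = (\<Sum>s\<in>(UNIV::'a::{ab_group_add,finite} set). f s)"
  by (rule sum.reindex_bij_witness[where i="\<lambda>s. a - s" and j="\<lambda>s. a - s"]) auto

lemma NC_total_neg: "(\<Sum>b\<in>UNIV. int (NC k (- (b::'a::{field,finite})))) = int CARD('a) ^ k"
proof -
  have "(\<Sum>b\<in>UNIV. int (NC k (- (b::'a)))) = (\<Sum>b\<in>(UNIV::'a set). int (NC k b))"
    by (rule sum_neg)
  also have "\<dots> = int (\<Sum>b\<in>(UNIV::'a set). NC k b)" by simp
  also have "\<dots> = int CARD('a) ^ k" by (simp add: NC_total)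
  finally show ?thesis .
qed

lemma NC_rec:
  assumes odd: "odd CARD('a::{field,finite})"
  shows "int (NC (Suc (Suc k)) (0::'a)) =
    int CARD('a) * eps TYPE('a) * int (NC k (0::'a)) + (int CARD('a) - eps TYPE('a)) * int CARD('a) ^ k"
proof -
  let ?q = "int CARD('a)" and ?e = "eps TYPE('a)" and ?X = "int (NC k (0::'a))"
  have "int (NC (Suc (Suc k)) (0::'a)) = (\<Sum>b\<in>UNIV. int (N2 (b::'a)) * int (NC k (- b)))"
    by (rule NC_rec0)
  also have "\<dots> = int (N2 (0::'a)) * int (NC k (- (0::'a))) + (\<Sum>b\<in>UNIV - {0}. int (N2 (b::'a)) * int (NC k (- b)))"
    using sum.remove[of "UNIV::'a set" 0 "\<lambda>b::'a. int (N2 b) * int (NC k (- b))"] by simp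
  also have "(\<Sum>b\<in>UNIV - {0}. int (N2 (b::'a)) * int (NC k (- b))) = (\<Sum>b\<in>UNIV - {0}. int (N2 (1::'a)) * int (NC k (- (b::'a))))"
  proof (rule sum.cong)
    fix b :: 'a assume "b \<in> UNIV - {0}"
    then show "int (N2 b) * int (NC k (- b)) = int (N2 (1::'a)) * int (NC k (- b))"
      using N2_const[OF odd, of b] by simp
  qed simp
  also have "\<dots> = int (N2 (1::'a)) * (\<Sum>b\<in>UNIV - {0}. int (NC k (- (b::'a))))"
    by (simp add: sum_distrib_left)
  also have "(\<Sum>b\<in>UNIV - {0}. int (NC k (- (b::'a)))) = ?q ^ k - ?X"
  proof -
    have "(\<Sum>b\<in>UNIV. int (NC k (- (b::'a)))) = int (NC k (- (0::'a))) + (\<Sum>b\<in>UNIV - {0}. int (NC k (- (b::'a))))"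
      using sum.remove[of "UNIV::'a set" 0 "\<lambda>b::'a. int (NC k (- b))"] by simp
    then show ?thesis using NC_total_neg[of k, where 'a='a] by simp
  qed
  finally have E: "int (NC (Suc (Suc k)) (0::'a)) = int (N2 (0::'a)) * ?X + int (N2 (1::'a)) * (?q ^ k - ?X)"
    by simp
  show ?thesis unfolding E N2_0[OF odd] N2_1[OF odd] by (simp add: algebra_simps)
qed

lemma NC_odd_form:
  assumes odd: "odd CARD('a::{field,finite})"
  shows "int (NC (2 * s + 1) (0::'a)) = int CARD('a) ^ (2 * s)"
proof (induction s)
  case 0
  then show ?case using NC_1_0[where 'a='a] by simp
next
  case (Suc s)
  have "2 * Suc s + 1 = Suc (Suc (2 * s + 1))" by simp
  then have "int (NC (2 * Suc s + 1) (0::'a)) = int (NC (Suc (Suc (2 * s + 1))) (0::'a))" by simp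
  also have "\<dots> = int CARD('a) * eps TYPE('a) * int CARD('a) ^ (2 * s)
      + (int CARD('a) - eps TYPE('a)) * int CARD('a) ^ (2 * s + 1)"
    unfolding NC_rec[OF odd] Suc ..
  also have "\<dots> = int CARD('a) ^ (2 * Suc s)" by (simp add: algebra_simps)
  finally show ?case .
qed

lemma NC_even_form:
  assumes odd: "odd CARD('a::{field,finite})"
  shows "int (NC (2 * r + 2) (0::'a)) = int CARD('a) ^ (2 * r + 1)
     + eps TYPE('a) ^ (r + 1) * (int CARD('a) ^ (r + 1) - int CARD('a) ^ r)"
proof (induction r)
  case 0
  have "int (NC (2 * 0 + 2) (0::'a)) = int (NC (Suc (Suc 0)) (0::'a))" by simp
  also have "\<dots> = int CARD('a) * eps TYPE('a) * 1 + (int CARD('a) - eps TYPE('a)) * 1"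
    unfolding NC_rec[OF odd] by (simp add: NC_0)
  finally show ?case by (simp add: algebra_simps)
next
  case (Suc r)
  have "2 * Suc r + 2 = Suc (Suc (2 * r + 2))" by simp
  then have "int (NC (2 * Suc r + 2) (0::'a)) = int (NC (Suc (Suc (2 * r + 2))) (0::'a))" by simp
  also have "\<dots> = int CARD('a) * eps TYPE('a) * (int CARD('a) ^ (2 * r + 1)
     + eps TYPE('a) ^ (r + 1) * (int CARD('a) ^ (r + 1) - int CARD('a) ^ r))
      + (int CARD('a) - eps TYPE('a)) * int CARD('a) ^ (2 * r + 2)"
    unfolding NC_rec[OF odd] Suc ..
  also have "\<dots> = int CARD('a) ^ (2 * Suc r + 1)
     + eps TYPE('a) ^ (Suc r + 1) * (int CARD('a) ^ (Suc r + 1) - int CARD('a) ^ Suc r)"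
    by (simp add: algebra_simps)
  finally show ?case .
qed

lemma NC_char2:
  assumes ev: "even CARD('a::{field,finite})"
  shows "NC (Suc k) (a::'a) = CARD('a) ^ k"
proof -
  have 2: "(2::'a) = 0" using two_zero_iff ev by blast
  have inj: "inj (\<lambda>t::'a. t^2)"
  proof (rule injI)
    fix t u :: 'a assume "t^2 = u^2"
    then have "t = u \<or> t = -u" by (simp add: power2_eq_iff)
    moreover have "-u = u"
    proof -
      have "u + u = 2 * u" by (metis mult_2)
      then have "u + u = 0" using 2 by simp
      then show ?thesis by (metis add_eq_0_iff)
    qed
    ultimately show "t = u" by auto
  qed
  have img: "range (\<lambda>t::'a. t^2) = UNIV" using finite_UNIV_inj_surj[OF _ inj] by simp
  have "NC (Suc k) a = (\<Sum>t\<in>UNIV. NC k (a - t^2))" by (rule NC_Suc)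
  also have "\<dots> = (\<Sum>s\<in>range (\<lambda>t::'a. t^2). NC k (a - s))"
    by (simp add: sum.reindex[OF inj] o_def)
  also have "\<dots> = (\<Sum>s\<in>(UNIV::'a set). NC k (a - s))" by (simp only: img)
  also have "\<dots> = (\<Sum>s\<in>(UNIV::'a set). NC k s)" by (rule sum_refl)
  also have "\<dots> = CARD('a) ^ k" by (rule NC_total)
  finally show ?thesis .
qed

lemma card_vec_ssq:
  "card {u::'a::{field,finite}^'n. (\<Sum>i\<in>UNIV. (u$i)^2) = 0} = NC CARD('n) (0::'a)"
proof -
  define n where "n = CARD('n)"
  obtain h where h: "bij_betw h {0..<n} (UNIV::'n set)"
    using ex_bij_betw_nat_finite[of "UNIV::'n set"] n_def by auto
  have hinj: "inj_on h {0..<n}" and hsurj: "h ` {0..<n} = UNIV" using h by (auto simp: bij_betw_def)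
  define L where "L = (\<lambda>u::'a^'n. map (\<lambda>i. u $ h i) [0..<n])"
  have ssqL: "ssq (L u) = (\<Sum>j\<in>UNIV. (u$j)^2)" for u
  proof -
    have "ssq (L u) = sum_list (map (\<lambda>i. (u $ h i)^2) [0..<n])"
      by (simp add: ssq_def L_def o_def)
    also have "\<dots> = (\<Sum>i\<in>{0..<n}. (u $ h i)^2)"
      by (simp add: sum_set_upt_conv_sum_list_nat[symmetric])
    also have "\<dots> = (\<Sum>j\<in>UNIV. (u$j)^2)" by (rule sum.reindex_bij_betw[OF h])
    finally show ?thesis .
  qed
  have injL: "inj L"
  proof (rule injI)
    fix u v assume "L u = L v"
    then have E: "\<forall>i\<in>{0..<n}. u $ h i = v $ h i" by (simp add: L_def map_eq_conv)
    show "u = v"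
      unfolding vec_eq_iff
    proof
      fix j :: 'n
      obtain i where "i \<in> {0..<n}" "j = h i" using hsurj by (metis UNIV_I imageE)
      then show "u $ j = v $ j" using E by simp
    qed
  qed
  have imgL: "L ` {u. (\<Sum>i\<in>UNIV. (u$i)^2) = 0} = {xs. length xs = n \<and> ssq xs = 0}"
  proof
    show "L ` {u. (\<Sum>i\<in>UNIV. (u$i)^2) = 0} \<subseteq> {xs. length xs = n \<and> ssq xs = 0}"
      using ssqL by (auto simp: L_def)
    show "{xs. length xs = n \<and> ssq xs = 0} \<subseteq> L ` {u. (\<Sum>i\<in>UNIV. (u$i)^2) = 0}"
    proof
      fix xs :: "'a list" assume xs: "xs \<in> {xs. length xs = n \<and> ssq xs = 0}"
      define u where "u = (\<chi> j. xs ! (inv_into {0..<n} h j))"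
      have "L u = xs"
      proof (rule nth_equalityI)
        show "length (L u) = length xs" using xs by (simp add: L_def)
        fix i assume "i < length (L u)"
        then have i: "i < n" by (simp add: L_def)
        have "L u ! i = u $ h i" using i by (simp add: L_def)
        also have "\<dots> = xs ! i" using i hinj by (simp add: u_def)
        finally show "L u ! i = xs ! i" .
      qed
      moreover have "(\<Sum>i\<in>UNIV. (u$i)^2) = 0" using xs ssqL[of u] \<open>L u = xs\<close> by simp
      ultimately show "xs \<in> L ` {u. (\<Sum>i\<in>UNIV. (u$i)^2) = 0}" by blast
    qed
  qed
  have "card {u::'a^'n. (\<Sum>i\<in>UNIV. (u$i)^2) = 0} = card (L ` {u. (\<Sum>i\<in>UNIV. (u$i)^2) = 0})"
    by (rule card_image[symmetric]) (rule inj_on_subset[OF injL], simp)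
  also have "\<dots> = NC n (0::'a)" by (simp add: imgL NC_def)
  finally show ?thesis by (simp add: n_def)
qed



lemma mat_mult_vec: "(mat c *v u) $ i = c * (u::'a::field^'n) $ i"
  by (simp add: matrix_vector_mult_def mat_def if_distrib if_distribR sum.delta cong: if_cong)

lemma herm_self: "herm u u = (\<Sum>i\<in>UNIV. ((u::'a::{field,finite}^'n)$i)^2)"
  unfolding herm_def by (rule sum.cong) (simp_all add: pow_card power2_eq_square)

lemma herm_mat: "herm u (mat c *v u) = c * herm (u::'a::{field,finite}^'n) u"
  unfolding herm_def mat_mult_vec by (simp add: sum_distrib_left mult_ac)

lemma eps_cases: "eps TYPE('a::{field,finite}) = 1 \<or> eps TYPE('a) = -1"
  by (simp add: eps_def)

lemma eps_1:
  assumes "odd CARD('a::{field,finite})" "CARD('a) mod 4 = 1"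
  shows "eps TYPE('a) = 1"
  using minus_one_sq_if[OF assms] by (simp add: eps_def)

lemma eps_3:
  assumes "odd CARD('a::{field,finite})" "CARD('a) mod 4 = 3"
  shows "eps TYPE('a) = -1"
proof -
  have "\<not> (\<exists>i::'a. i^2 = -1)"
  proof
    assume "\<exists>i::'a. i^2 = -1"
    then obtain i :: 'a where "i^2 = -1" by blast
    from minus_one_sq_imp[OF assms(1) this] assms(2) show False by simp
  qed
  then show ?thesis by (simp add: eps_def)
qed

theorem proposition7:
  fixes c :: "'a::{field,finite}" and M :: "'a^'n^'n"
  assumes n2: "CARD('n) \<ge> 2" and c0: "c \<noteq> 0" and M: "M = mat c"
  shows "(even CARD('a) \<longrightarrow>
            Num0' M = {0} \<and> card (nu'_preimage M 0) = CARD('a) ^ (CARD('n) - 1))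
       \<and> (odd CARD('a) \<longrightarrow>
            ((CARD('n) \<ge> 3 \<or> (CARD('n) = 2 \<and> CARD('a) mod 4 = 1)) \<longrightarrow> Num0' M = {0})
          \<and> ((CARD('n) = 2 \<and> CARD('a) mod 4 = 3) \<longrightarrow> Num0' M = {})
          \<and> (\<forall>s. CARD('n) = 2 * s + 1 \<longrightarrow>
                 int (card (nu'_preimage M 0)) = int (CARD('a)) ^ (2 * s))
          \<and> (\<forall>s. CARD('n) = 2 * s \<and> (even s \<or> CARD('a) mod 4 = 1) \<longrightarrow>
                 int (card (nu'_preimage M 0)) =
                   int (CARD('a)) ^ (2 * s - 1) + int (CARD('a)) ^ s - int (CARD('a)) ^ (s - 1))
          \<and> (\<forall>s. CARD('n) = 2 * s \<and> odd s \<and> CARD('a) mod 4 = 3 \<longrightarrow>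
                 int (card (nu'_preimage M 0)) =
                   int (CARD('a)) ^ (2 * s - 1) - int (CARD('a)) ^ s + int (CARD('a)) ^ (s - 1)))"
proof -
  have Hm: "\<And>u. herm u (M *v u) = c * herm u u" using M herm_mat by simp
  have pre: "nu'_preimage M 0 = (Bset::('a^'n) set)"
    using c0 by (auto simp: nu'_preimage_def nu'_def Hm Bset_def)
  have Bs: "(Bset::('a^'n) set) = {u. (\<Sum>i\<in>UNIV. (u$i)^2) = 0}"
    by (simp add: Bset_def herm_self)
  have cardB: "card (Bset::('a^'n) set) = NC CARD('n) (0::'a)"
    using card_vec_ssq[where 'a='a and 'n='n] Bs by simp
  have Num: "Num0' M = (if \<exists>u\<in>(Bset::('a^'n) set). u \<noteq> 0 then {0} else {})"
    by (auto simp: Num0'_def Hm Bset_def)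
  have zB: "(0::'a^'n) \<in> Bset" by (simp add: Bset_def herm_def)
  have big: "\<exists>u\<in>(Bset::('a^'n) set). u \<noteq> 0" if "card (Bset::('a^'n) set) \<ge> 2"
  proof (rule ccontr)
    assume "\<not> ?thesis"
    then have "(Bset::('a^'n) set) \<subseteq> {0}" by auto
    then have "card (Bset::('a^'n) set) \<le> card {0::'a^'n}" by (rule card_mono[rotated]) simp
    with that show False by simp
  qed
  have one: "\<not> (\<exists>u\<in>(Bset::('a^'n) set). u \<noteq> 0)" if c1: "card (Bset::('a^'n) set) = 1"
  proof -
    obtain x where Bx: "(Bset::('a^'n) set) = {x}"
      using c1 card_1_singleton_iff[of "Bset::('a^'n) set"] by auto
    have "(0::'a^'n) \<in> {x}" using zB Bx by metis
    then have "x = 0" by simp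
    then show ?thesis using Bx by (metis singletonD)
  qed
  have q2: "CARD('a) \<ge> 2" by (rule card_ge2)
  define q where "q = int CARD('a)"
  have q2': "q \<ge> 2" using q2 by (simp add: q_def)
  show ?thesis
  proof (intro conjI impI allI)
    assume ev: "even CARD('a)"
    have n1: "CARD('n) = Suc (CARD('n) - 1)" using n2 by simp
    have N: "card (Bset::('a^'n) set) = CARD('a) ^ (CARD('n) - 1)"
      using cardB NC_char2[OF ev, of "CARD('n) - 1" 0] n1 by simp
    then show "card (nu'_preimage M 0) = CARD('a) ^ (CARD('n) - 1)" using pre by simp
    have "CARD('a) ^ 1 \<le> CARD('a) ^ (CARD('n) - 1)"
      by (rule power_increasing) (use n2 q2 in auto)
    then have "card (Bset::('a^'n) set) \<ge> 2" using N q2 by simp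
    then show "Num0' M = {0}" using Num big by simp
  next
    assume odd: "odd CARD('a)"
    define e where "e = eps TYPE('a)"
    have e: "e = 1 \<or> e = -1" unfolding e_def by (rule eps_cases)
    have oddf: "\<And>s. CARD('n) = 2 * s + 1 \<Longrightarrow> int (card (Bset::('a^'n) set)) = q ^ (2 * s)"
      using cardB NC_odd_form[OF odd] by (simp add: q_def)
    have evenf: "\<And>r. CARD('n) = 2 * r + 2 \<Longrightarrow>
        int (card (Bset::('a^'n) set)) = q ^ (2 * r + 1) + e ^ (r + 1) * (q ^ (r + 1) - q ^ r)"
      using cardB NC_even_form[OF odd] by (simp add: q_def e_def)
    show "int (card (nu'_preimage M 0)) = int CARD('a) ^ (2 * s)" if "CARD('n) = 2 * s + 1" for s
      using oddf[OF that] pre by (simp add: q_def)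
    show "int (card (nu'_preimage M 0)) =
          int CARD('a) ^ (2 * s - 1) + int CARD('a) ^ s - int CARD('a) ^ (s - 1)"
      if H: "CARD('n) = 2 * s \<and> (even s \<or> CARD('a) mod 4 = 1)" for s
    proof -
      obtain r where r: "s = Suc r" using H n2 by (cases s) auto
      have es: "e ^ (r + 1) = 1"
      proof (cases "CARD('a) mod 4 = 1")
        case True then show ?thesis using eps_1[OF odd True] by (simp add: e_def)
      next
        case False
        then have "even s" using that by simp
        then show ?thesis using e r by auto
      qed
      have "int (card (Bset::('a^'n) set)) = q ^ (2 * r + 1) + e ^ (r + 1) * (q ^ (r + 1) - q ^ r)"
        using evenf[of r] that r by simp
      then show ?thesis using pre es r by (simp add: q_def)
    qed
    show "int (card (nu'_preimage M 0)) =
          int CARD('a) ^ (2 * s - 1) - int CARD('a) ^ s + int CARD('a) ^ (s - 1)"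
      if H: "CARD('n) = 2 * s \<and> odd s \<and> CARD('a) mod 4 = 3" for s
    proof -
      obtain r where r: "s = Suc r" using H n2 by (cases s) auto
      have es: "e ^ (r + 1) = -1"
        using eps_3[OF odd] that r by (simp add: e_def)
      have "int (card (Bset::('a^'n) set)) = q ^ (2 * r + 1) + e ^ (r + 1) * (q ^ (r + 1) - q ^ r)"
        using evenf[of r] that r by simp
      then show ?thesis using pre es r by (simp add: q_def)
    qed
    show "Num0' M = {}" if "CARD('n) = 2 \<and> CARD('a) mod 4 = 3"
    proof -
      have "e = -1" using eps_3[OF odd] that by (simp add: e_def)
      then have "int (card (Bset::('a^'n) set)) = 1" using evenf[of 0] that by simp
      then have "card (Bset::('a^'n) set) = 1" by simp
      then show ?thesis using Num one by simp
    qed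
    show "Num0' M = {0}" if "CARD('n) \<ge> 3 \<or> (CARD('n) = 2 \<and> CARD('a) mod 4 = 1)"
    proof -
      have "int (card (Bset::('a^'n) set)) \<ge> 2"
      proof (cases "CARD('n) = 2")
        case True
        then have "CARD('a) mod 4 = 1" using that by simp
        then have "e = 1" using eps_1[OF odd] by (simp add: e_def)
        then show ?thesis using evenf[of 0] True q2' by simp
      next
        case False
        then have n3: "CARD('n) \<ge> 3" using that by simp
        show ?thesis
        proof (cases "even CARD('n)")
          case False
          then obtain s where s: "CARD('n) = 2 * s + 1" by (metis oddE)
          have "q ^ 1 \<le> q ^ (2 * s)" by (rule power_increasing) (use n3 s q2' in auto)
          then show ?thesis using oddf[OF s] q2' by simp
        next
          case True
          then obtain k where k: "CARD('n) = 2 * k" by (rule evenE)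
          define r where "r = k - 1"
          have r: "CARD('n) = 2 * r + 2" using k n3 by (simp add: r_def)
          have r1: "r \<ge> 1" using r n3 by simp
          define A where "A = q ^ r"
          have A2: "A \<ge> 2"
          proof -
            have "q ^ 1 \<le> q ^ r" by (rule power_increasing) (use r1 q2' in auto)
            then show ?thesis using q2' by (simp add: A_def)
          qed
          have p1: "q ^ (r + 1) = q * A" by (simp add: A_def)
          have "q ^ (2 * r + 1) = q * (q ^ r)^2" by (simp add: power_mult[symmetric] mult.commute)
          then have p2: "q ^ (2 * r + 1) = q * A * A" by (simp add: A_def power2_eq_square mult.assoc)
          have nn: "0 \<le> q * A * (A - 1)" using q2' A2 by simp
          have ex: "q * A * (A - 1) = q * A * A - q * A" by (simp add: algebra_simps)
          define X where "X = q * A - A"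
          have N: "int (card (Bset::('a^'n) set)) = q * A * A + e ^ (r + 1) * X"
            using evenf[OF r] p1 p2 by (simp add: A_def X_def)
          have disj: "e ^ (r + 1) = 1 \<or> e ^ (r + 1) = -1" using e by (elim disjE) (simp_all add: minus_one_power_iff)
          have X0: "0 \<le> X"
          proof -
            have "A \<le> q * A" using q2' A2 by simp
            then show ?thesis by (simp add: X_def)
          qed
          have "e ^ (r + 1) * X \<ge> - X"
          proof (cases "e ^ (r + 1) = 1")
            case True then show ?thesis using X0 by simp
          next
            case False then have "e ^ (r + 1) = -1" using disj by simp
            then show ?thesis by simp
          qed
          then have "int (card (Bset::('a^'n) set)) \<ge> q * A * A - (q * A - A)"
            using N by (simp add: X_def)
          then show ?thesis using nn ex A2 by linarith
        qed
      qed
      then have "card (Bset::('a^'n) set) \<ge> 2" by simp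
      then show ?thesis using Num big by simp
    qed
  qed
qed


end
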